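(* Let $\alpha>0$ and $\hbar>0$ be constants, and let $\tilde g:\mathbb{R}\setminus\{0\}\to\mathbb{R}$ be a continuously differentiable function. Let $\psi\in L^{2}(\mathbb{R},dp)$ be a nonzero function that is continuously differentiable on $\mathbb{R}\setminus\{0\}$. For $\tau\in\mathbb{R}$ define $$\mathcal{A}_\psi(\tau)=4\pi\int_{\mathbb{R}}dp\,\left|\left(\frac{d\tilde g(p)}{dp}+\frac{\alpha^{2}}{p^{2}}\tau\right)\psi(p)-i\hbar\,\frac{d\psi(p)}{dp}\right|^{2}\in[0,\infty].$$ Then for every $\tau\in\mathbb{R}$ one has $\mathcal{A}_\psi(\tau)>0$; that is, there is no nonzero square-integrable $\psi$ and no $\tau_0\in\mathbb{R}$ with $\mathcal{A}_\psi(\tau_0)=0$.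
   Context: $\mathcal{A}_\psi(\tau)$ is the expectation value, in the physical state with reduced amplitude $\psi(p_a)$, of the gauge-invariant relational observable associated with the area $4\pi a^2$ of 2-spheres in the Schwarzschild interior, at relational clock time $\tau$; here $p=p_a$ and $\tilde g(p)=-\hbar\,g(-\alpha^2/p)$ where $g$ is the phase function specifying the choice of clock. *)

theory Defs
  imports "HOL-Analysis.Analysis"
begin

text \<open>The value of the integrand at p = 0 is irrelevant (null set).\<close>
definition area_expect ::
  "real \<Rightarrow> real \<Rightarrow> (real \<Rightarrow> real) \<Rightarrow> (real \<Rightarrow> complex) \<Rightarrow> real \<Rightarrow> ennreal" where
  "area_expect \<alpha> hbar gt \<psi> \<tau> =
     ennreal (4 * pi) *
     (\<integral>\<^sup>+ p. ennreal ((cmod (complex_of_real (deriv gt p + \<alpha>\<^sup>2 / p\<^sup>2 * \<tau>) * \<psi> p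
                              - \<i> * complex_of_real hbar * vector_derivative \<psi> (at p)))\<^sup>2) \<partial>lborel)"

end

theory Submission
  imports Defs
begin

lemma pos_integral_cont:
  fixes f :: "real \<Rightarrow> real"
  assumes "isCont f p" "f p > 0"
  shows "(\<integral>\<^sup>+ x. ennreal (f x) \<partial>lborel) > 0"
proof -
  have "\<forall>\<^sub>F x in at p. f x > f p / 2"
    using assms by (intro order_tendstoD) (auto simp: isCont_def)
  then obtain e where e: "e > 0" "\<And>y. y \<noteq> p \<Longrightarrow> dist y p < e \<Longrightarrow> f y > f p / 2"
    by (auto simp: eventually_at)
  have le: "ennreal (f p / 2) * indicator {p-e<..<p+e} x \<le> ennreal (f x)" for x
  proof (cases "x \<in> {p-e<..<p+e}")
    case True
    then have "f x \<ge> f p / 2"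
      using e assms(2) by (cases "x = p") (auto simp: dist_real_def abs_if intro: less_imp_le)
    then show ?thesis using True by (simp add: ennreal_leI)
  qed simp
  have "0 < ennreal (f p / 2) * emeasure lborel {p-e<..<p+e}"
    using e assms by (simp add: ennreal_zero_less_mult_iff)
  also have "\<dots> = (\<integral>\<^sup>+ x. ennreal (f p / 2) * indicator {p-e<..<p+e} x \<partial>lborel)"
    by (simp add: nn_integral_cmult_indicator)
  also have "\<dots> \<le> (\<integral>\<^sup>+ x. ennreal (f x) \<partial>lborel)"
    by (intro nn_integral_mono le)
  finally show ?thesis .
qed

lemma const_not_integrable:
  fixes h :: "real \<Rightarrow> real" and c :: real
  assumes "integrable lborel h" "\<And>x. x \<in> S \<Longrightarrow> h x = c" "c > 0"
    "S \<in> sets lborel" "emeasure lborel S = \<infinity>" "\<And>x. h x \<ge> 0"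
  shows False
proof -
  have "\<infinity> = (\<integral>\<^sup>+ x. ennreal c * indicator S x \<partial>lborel)"
    using assms by (simp add: nn_integral_cmult_indicator ennreal_mult_top)
  also have "\<dots> \<le> (\<integral>\<^sup>+ x. ennreal (h x) \<partial>lborel)"
    using assms by (intro nn_integral_mono) (auto simp: indicator_def)
  also have "\<dots> = ennreal (integral\<^sup>L lborel h)"
    using assms by (intro nn_integral_eq_integral) auto
  finally show False by (simp add: top_unique)
qed

lemma inf_meas:
  assumes "emeasure lborel S \<noteq> \<infinity>" "{a<..<b} \<subseteq> S" "S \<in> sets lborel" "(a::real) < b"
  shows "ennreal (b - a) \<le> emeasure lborel S"
  using emeasure_mono[OF assms(2) assms(3)] assms(4) by simp

lemma Ioi_inf: "emeasure lborel {(0::real)<..} = \<infinity>"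
proof (rule ccontr)
  assume A: "emeasure lborel {(0::real)<..} \<noteq> \<infinity>"
  then obtain r where r: "emeasure lborel {(0::real)<..} = ennreal r" "r \<ge> 0"
    using ennreal_cases[of "emeasure lborel {(0::real)<..}"] by auto
  have "ennreal (r + 1 - 0) \<le> emeasure lborel {(0::real)<..}"
    by (rule inf_meas[OF A]) (use r in auto)
  then show False using r by (simp add: ennreal_le_iff)
qed

lemma Iio_inf: "emeasure lborel {..<(0::real)} = \<infinity>"
proof (rule ccontr)
  assume A: "emeasure lborel {..<(0::real)} \<noteq> \<infinity>"
  then obtain r where r: "emeasure lborel {..<(0::real)} = ennreal r" "r \<ge> 0"
    using ennreal_cases[of "emeasure lborel {..<(0::real)}"] by auto
  have "ennreal (0 - (-r - 1)) \<le> emeasure lborel {..<(0::real)}"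
    by (rule inf_meas[OF A]) (use r in auto)
  then show False using r by (simp add: ennreal_le_iff)
qed

theorem mainTheorem1:
  fixes \<alpha> hbar :: real and gt :: "real \<Rightarrow> real" and \<psi> :: "real \<Rightarrow> complex"
  assumes "\<alpha> > 0" and "hbar > 0"
    and "gt C1_differentiable_on (- {0})"
    and "\<psi> \<in> borel_measurable lborel"
    and "integrable lborel (\<lambda>p. (cmod (\<psi> p))\<^sup>2)"
    and "\<not> (AE p in lborel. \<psi> p = 0)"
    and "\<psi> C1_differentiable_on (- {0})"
  shows "\<forall>\<tau>::real. area_expect \<alpha> hbar gt \<psi> \<tau> > 0"
proof
  fix \<tau> :: real
  obtain Dg where Dg: "\<And>x. x \<in> - {0} \<Longrightarrow> (gt has_vector_derivative Dg x) (at x)"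
    "continuous_on (- {0}) Dg"
    using assms(3) unfolding C1_differentiable_on_def by blast
  obtain Dp where Dp: "\<And>x. x \<in> - {0} \<Longrightarrow> (\<psi> has_vector_derivative Dp x) (at x)"
    "continuous_on (- {0}) Dp"
    using assms(7) unfolding C1_differentiable_on_def by blast
  have dg: "deriv gt x = Dg x" if "x \<noteq> 0" for x
    using Dg(1)[of x] that by (intro DERIV_imp_deriv) (simp add: has_real_derivative_iff_has_vector_derivative)
  have dp: "vector_derivative \<psi> (at x) = Dp x" if "x \<noteq> 0" for x
    using Dp(1)[of x] that by (intro vector_derivative_at) simp
  have cpsi: "continuous_on (- {0}) \<psi>"
    using Dp(1) by (intro continuous_at_imp_continuous_on ballI differentiable_imp_continuous_within
        differentiableI_vector) (auto)
  define F where "F p = (cmod (complex_of_real (Dg p + \<alpha>\<^sup>2 / p\<^sup>2 * \<tau>) * \<psi> p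
                              - \<i> * complex_of_real hbar * Dp p))\<^sup>2" for p
  have cF: "continuous_on (- {0}) F"
    unfolding F_def using Dg(2) Dp(2) cpsi by (intro continuous_intros) auto
  show "area_expect \<alpha> hbar gt \<psi> \<tau> > 0"
  proof (rule ccontr)
    assume nz: "\<not> area_expect \<alpha> hbar gt \<psi> \<tau> > 0"
    have F0: "F p = 0" if "p \<noteq> 0" for p
    proof (rule ccontr)
      assume "F p \<noteq> 0"
      then have Fp: "F p > 0" unfolding F_def by simp
      have "isCont F p"
        using cF that by (simp add: continuous_on_eq_continuous_at open_Compl)
      have "0 < (\<integral>\<^sup>+ x. ennreal (F x) \<partial>lborel)"
        by (rule pos_integral_cont) fact+
      also have "(\<integral>\<^sup>+ x. ennreal (F x) \<partial>lborel) =
         (\<integral>\<^sup>+ p. ennreal ((cmod (complex_of_real (deriv gt p + \<alpha>\<^sup>2 / p\<^sup>2 * \<tau>) * \<psi> p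
                              - \<i> * complex_of_real hbar * vector_derivative \<psi> (at p)))\<^sup>2) \<partial>lborel)"
        by (intro nn_integral_cong_AE, rule AE_mp[OF AE_lborel_singleton[of 0]])
           (auto simp: F_def dg dp)
      finally show False using nz by (simp add: area_expect_def ennreal_zero_less_mult_iff)
    qed
    define h where "h p = (cmod (\<psi> p))\<^sup>2" for p
    have hder: "(h has_field_derivative 0) (at x within S)" if "x \<noteq> 0" for x S
    proof -
      define c where "c = Dg x + \<alpha>\<^sup>2 / x\<^sup>2 * \<tau>"
      have eq: "complex_of_real c * \<psi> x = \<i> * complex_of_real hbar * Dp x"
        using F0[OF that] unfolding F_def c_def by simp
      have R: "hbar * Re (Dp x) = c * Im (\<psi> x)" and I: "hbar * Im (Dp x) = - c * Re (\<psi> x)"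
        using arg_cong[OF eq, of Re] arg_cong[OF eq, of Im] by auto
      have d: "((\<lambda>x. Re (\<psi> x)) has_field_derivative Re (Dp x)) (at x within S)"
              "((\<lambda>x. Im (\<psi> x)) has_field_derivative Im (Dp x)) (at x within S)"
        using Dp(1)[of x] that has_field_derivative_at_within
        by (auto simp: has_vector_derivative_complex_iff)
      have h_eq: "h = (\<lambda>x. Re (\<psi> x) * Re (\<psi> x) + Im (\<psi> x) * Im (\<psi> x))"
        by (rule ext) (unfold h_def cmod_power2, simp add: power2_eq_square)
      have "(h has_field_derivative
          (Re (\<psi> x) * Re (Dp x) + Re (Dp x) * Re (\<psi> x) + (Im (\<psi> x) * Im (Dp x) + Im (Dp x) * Im (\<psi> x))))
          (at x within S)"
        unfolding h_eq by (intro DERIV_add DERIV_mult' d)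
      moreover have "Re (\<psi> x) * Re (Dp x) + Re (Dp x) * Re (\<psi> x) + (Im (\<psi> x) * Im (Dp x) + Im (Dp x) * Im (\<psi> x)) = 0"
      proof -
        have "hbar * (Re (\<psi> x) * Re (Dp x) + Im (\<psi> x) * Im (Dp x)) =
            (hbar * Re (Dp x)) * Re (\<psi> x) + (hbar * Im (Dp x)) * Im (\<psi> x)"
          by (simp add: algebra_simps)
        also have "\<dots> = 0" unfolding R I by (simp add: algebra_simps)
        finally have "hbar * (Re (\<psi> x) * Re (Dp x) + Im (\<psi> x) * Im (Dp x)) = 0" .
        then have S0: "Re (\<psi> x) * Re (Dp x) + Im (\<psi> x) * Im (Dp x) = 0" using assms(2) by simp
        have "Re (Dp x) * Re (\<psi> x) = Re (\<psi> x) * Re (Dp x)" "Im (Dp x) * Im (\<psi> x) = Im (\<psi> x) * Im (Dp x)"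
          by (simp_all add: mult.commute)
        then show ?thesis using S0 by linarith
      qed
      ultimately show ?thesis by simp
    qed
    have hint: "integrable lborel h" using assms(5) unfolding h_def[abs_def] .
    have hpos: "\<And>x. h x \<ge> 0" by (simp add: h_def)
    have pos: "\<psi> x = 0" if "x > 0" for x
    proof -
      obtain c where c: "\<forall>y\<in>{0<..}. h y = c"
        using has_field_derivative_zero_constant[of "{0<..}" h] hder by force
      have "c = 0"
      proof (rule ccontr)
        assume "c \<noteq> 0"
        then have "c > 0" using c hpos[of 1] by force
        then show False
          using const_not_integrable[OF hint, of "{0<..}" c] c hpos Ioi_inf by auto
      qed
      then show ?thesis using c that by (auto simp: h_def)
    qed
    have neg: "\<psi> x = 0" if "x < 0" for x
    proof -
      obtain c where c: "\<forall>y\<in>{..<0}. h y = c"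
        using has_field_derivative_zero_constant[of "{..<0}" h] hder by force
      have "c = 0"
      proof (rule ccontr)
        assume "c \<noteq> 0"
        then have "c > 0" using c hpos[of "-1"] by force
        then show False
          using const_not_integrable[OF hint, of "{..<0}" c] c hpos Iio_inf by auto
      qed
      then show ?thesis using c that by (auto simp: h_def)
    qed
    have "AE p in lborel. \<psi> p = 0"
      by (rule AE_mp[OF AE_lborel_singleton[of 0]]) (auto intro: pos neg simp: neq_iff)
    then show False using assms(6) by simp
  qed
qed

end
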